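(* For all $b\in(0,\pi/2)$, $\pi^2\frac{I_1(b)}{I_2(b)^3}<2$, where $I_1(b)=\int_{-b}^{b}\frac{\cos^5\varphi}{\sqrt{\cos^4\varphi-\cos^4b}}\,d\varphi$ and $I_2(b)=\int_{-b}^{b}\frac{\cos^3\varphi}{\sqrt{\cos^4\varphi-\cos^4b}}\,d\varphi$. *)

theory Defs
  imports "HOL-Analysis.Analysis"
begin

definition I1 :: "real \<Rightarrow> real" where
  "I1 b = (LBINT \<phi>=-b..b. cos \<phi> ^ 5 / sqrt (cos \<phi> ^ 4 - cos b ^ 4))"

definition I2 :: "real \<Rightarrow> real" where
  "I2 b = (LBINT \<phi>=-b..b. cos \<phi> ^ 3 / sqrt (cos \<phi> ^ 4 - cos b ^ 4))"

end

theory Submission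
  imports Defs
begin

lemma subst_lemma:
  fixes b :: real and n :: nat
  assumes b0: "0 < b" and b1: "b < pi/2"
  shows "(LBINT \<phi>=-b..b. cos \<phi> ^ (2*n+1) / sqrt (cos \<phi> ^ 4 - cos b ^ 4))
       = (LBINT \<theta>=-pi/2..pi/2. (1 - (sin b)^2 * sin \<theta>^2) ^ n / sqrt (2 - (sin b)^2 - (sin b)^2 * sin \<theta>^2))"
proof -
  define a where "a = sin b"
  define e where "e = a^2"
  have a0: "0 < a" unfolding a_def using b0 b1 by (intro sin_gt_zero) auto
  have a1: "a < 1" unfolding a_def using b0 b1
    using sin_monotone_2pi[of b "pi/2"] by simp
  have cb: "cos b ^ 2 = 1 - e" unfolding e_def a_def by (simp add: cos_squared_eq)
  define g where "g = (\<lambda>\<theta>::real. arcsin (a * sin \<theta>))"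
  define g' where "g' = (\<lambda>\<theta>::real. a * cos \<theta> / sqrt (1 - (a * sin \<theta>)^2))"
  define f where "f = (\<lambda>\<phi>::real. cos \<phi> ^ (2*n+1) / sqrt (cos \<phi> ^ 4 - cos b ^ 4))"
  define G where "G = (\<lambda>\<theta>::real. (1 - e * sin \<theta>^2) ^ n / sqrt (2 - e - e * sin \<theta>^2))"
  have asin_lt: "\<bar>a * sin \<theta>\<bar> < 1" for \<theta>
  proof -
    have "\<bar>a * sin \<theta>\<bar> = a * \<bar>sin \<theta>\<bar>" using a0 by (simp add: abs_mult)
    also have "\<dots> \<le> a" using a0 by (simp add: mult_left_le)
    finally show ?thesis using a1 by simp
  qed
  have W_pos: "0 < 1 - (a * sin \<theta>)^2" for \<theta>
  proof -
    have "(a * sin \<theta>)^2 < 1" using asin_lt[of \<theta>]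
      by (metis abs_less_iff abs_square_less_1)
    then show ?thesis by simp
  qed
  have cosg: "cos (g \<theta>) = sqrt (1 - e * sin \<theta>^2)" for \<theta>
    unfolding g_def e_def using asin_lt[of \<theta>]
    by (subst cos_arcsin) (auto simp: power_mult_distrib abs_less_iff)
  have U_pos: "0 < 2 - e - e * sin \<theta>^2" for \<theta>
  proof -
    have "sin \<theta>^2 \<le> 1" by (simp add: abs_square_le_1)
    hence "e * sin \<theta>^2 \<le> e" using a0 unfolding e_def by (simp add: mult_left_le)
    moreover have "e < 1" unfolding e_def using a0 a1 by (simp add: power_less_one_iff)
    ultimately show ?thesis by simp
  qed
  have We: "1 - e * sin \<theta>^2 = 1 - (a * sin \<theta>)^2" for \<theta> unfolding e_def by (simp add: power_mult_distrib)
  have key: "cos (g \<theta>) ^ 4 - cos b ^ 4 = (a * cos \<theta>)^2 * (2 - e - e * sin \<theta>^2)" for \<theta>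
  proof -
    have c2: "cos (g \<theta>) ^ 2 = 1 - e * sin \<theta>^2"
      using cosg[of \<theta>] W_pos[of \<theta>] We[of \<theta>] by simp
    have "cos (g \<theta>) ^ 4 = (cos (g \<theta>) ^ 2)^2" by simp
    hence "cos (g \<theta>) ^ 4 = (1 - e * sin \<theta>^2)^2" using c2 by simp
    moreover have "cos b ^ 4 = (cos b ^ 2)^2" by simp
    hence "cos b ^ 4 = (1 - e)^2" using cb by simp
    moreover have "(a * cos \<theta>)^2 = e - e * sin \<theta>^2" unfolding e_def
      by (simp add: power_mult_distrib cos_squared_eq algebra_simps)
    ultimately show ?thesis by (simp only:) (simp add: algebra_simps power2_eq_square)
  qed
  have pt: "f (g \<theta>) * g' \<theta> = G \<theta>" if "-pi/2 < \<theta>" "\<theta> < pi/2" for \<theta>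
  proof -
    have c0: "0 < cos \<theta>" using that by (intro cos_gt_zero_pi) auto
    have s1: "sqrt (cos (g \<theta>) ^ 4 - cos b ^ 4) = a * cos \<theta> * sqrt (2 - e - e * sin \<theta>^2)"
      using key[of \<theta>] a0 c0 by (simp add: real_sqrt_mult)
    have s2: "sqrt (1 - (a * sin \<theta>)^2) = sqrt (1 - e * sin \<theta>^2)" using We by simp
    have W0: "0 < sqrt (1 - e * sin \<theta>^2)" using W_pos[of \<theta>] We[of \<theta>] by simp
    have p: "cos (g \<theta>) ^ (2*n+1) = (1 - e * sin \<theta>^2)^n * sqrt (1 - e * sin \<theta>^2)"
      using cosg[of \<theta>] W_pos[of \<theta>] We[of \<theta>]
      by (simp add: power_add power_mult)
    show ?thesis unfolding f_def g'_def G_def s1 s2 p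
      using a0 c0 W0 U_pos[of \<theta>] by (simp add: field_simps)
  qed
  have gd: "(g has_real_derivative g' x) (at x)" for x
  proof -
    have d1: "((\<lambda>\<theta>. a * sin \<theta>) has_real_derivative a * cos x) (at x)"
      by (auto intro!: derivative_eq_intros)
    have d2: "(arcsin has_real_derivative inverse (sqrt (1 - (a * sin x)^2))) (at (a * sin x))"
      using asin_lt[of x] by (intro DERIV_arcsin) (auto simp: abs_less_iff)
    have "(g has_real_derivative inverse (sqrt (1 - (a * sin x)^2)) * (a * cos x)) (at x)"
      unfolding g_def by (rule DERIV_chain2[OF d2 d1])
    thus ?thesis unfolding g'_def by (simp add: field_simps)
  qed
  have gc: "isCont g x" for x using gd[of x] by (rule DERIV_isCont)
  have Wsq: "sqrt (1 - (a * sin x)^2) \<noteq> 0" for x using W_pos[of x] by simp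
  have contg': "isCont g' x" for x unfolding g'_def using Wsq[of x]
    by (intro continuous_intros) auto
  have fden: "0 < cos (g x) ^ 4 - cos b ^ 4" if "-pi/2 < x" "x < pi/2" for x
  proof -
    have c0: "0 < cos x" using that by (intro cos_gt_zero_pi) auto
    show ?thesis unfolding key using a0 c0 U_pos[of x] by simp
  qed
  have contf: "isCont f (g x)" if "-pi/2 < x" "x < pi/2" for x
    unfolding f_def using fden[OF that] by (intro continuous_intros) auto
  have fnn: "0 \<le> f (g x)" for x
  proof -
    have "0 \<le> cos (g x)" unfolding cosg using W_pos[of x] We[of x] by simp
    moreover have "0 \<le> (a * cos x)^2 * (2 - e - e * sin x^2)" using U_pos[of x] by simp
    ultimately show ?thesis unfolding f_def key by (intro divide_nonneg_nonneg zero_le_power) auto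
  qed
  have g'nn: "0 \<le> g' x" if "-pi/2 \<le> x" "x \<le> pi/2" for x
    unfolding g'_def using a0 cos_ge_zero[of x] that W_pos[of x] by (intro divide_nonneg_nonneg) auto
  have gl: "g (-pi/2) = -b" "g (pi/2) = b"
    unfolding g_def a_def using b0 b1 by (simp_all add: arcsin_sin arcsin_minus)
  have limA: "(g \<longlongrightarrow> -b) (at_right (-pi/2))"
    using gc[of "-pi/2"] gl(1) by (metis continuous_at filterlim_at_split)
  have limB: "(g \<longlongrightarrow> b) (at_left (pi/2))"
    using gc[of "pi/2"] gl(2) by (metis continuous_at filterlim_at_split)
  have Gc: "continuous_on {-pi/2..pi/2} G" unfolding G_def using U_pos
    by (intro continuous_intros) (auto simp: less_imp_neq[symmetric])
  have intG: "set_integrable lborel (einterval (-pi/2) (pi/2)) G"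
    by (rule set_integrable_subset[OF borel_integrable_atLeastAtMost'[OF Gc]]) auto
  have intfg: "set_integrable lborel (einterval (-pi/2) (pi/2)) (\<lambda>x. f (g x) * g' x)"
    using intG by (subst set_integrable_cong[OF refl refl]) (auto simp: pt einterval_iff)
  have main: "(LBINT x=ereal (-b)..ereal b. f x) = (LBINT x=ereal (-pi/2)..ereal (pi/2). f (g x) * g' x)"
    by (rule interval_integral_substitution_nonneg(2)[where f=f and g=g and g'=g'])
       (use gd contf contg' fnn g'nn intfg limA limB in \<open>auto simp: ereal_tendsto_simps\<close>)
  also have "\<dots> = (LBINT x=ereal (-pi/2)..ereal (pi/2). G x)"
    by (rule interval_integral_cong) (auto simp: pt einterval_iff min_def max_def)
  finally show ?thesis unfolding f_def G_def e_def a_def by simp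
qed
lemma sin_pow_cont: "continuous_on A (\<lambda>x::real. sin x ^ n)"
  by (intro continuous_intros)

lemma sin_pow_integrable: "(\<lambda>x::real. sin x ^ n) integrable_on {a..b}"
  by (intro integrable_continuous_interval sin_pow_cont)

lemma sin_pow_rec:
  "integral {-(pi/2)..pi/2} (\<lambda>x. sin x ^ (n+2)) = (n+1)/(n+2) * integral {-(pi/2)..pi/2} (\<lambda>x. sin x ^ n)"
proof -
  define F where "F = (\<lambda>x::real. sin x ^ (n+1) * cos x)"
  define f where "f = (\<lambda>x::real. (n+1) * sin x ^ n - (n+2) * sin x ^ (n+2))"
  have d: "(F has_vector_derivative f x) (at x within {-(pi/2)..pi/2})" for x
  proof -
    have "(F has_real_derivative (n+1) * sin x ^ n * cos x * cos x + sin x ^ (n+1) * (- sin x)) (at x)"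
    proof -
      have "((\<lambda>x. sin x ^ Suc n) has_real_derivative (1 + real n) * (cos x * sin x ^ n)) (at x)"
        by (intro DERIV_power_Suc DERIV_sin)
      hence "((\<lambda>x. sin x ^ Suc n * cos x) has_real_derivative (1 + real n) * (cos x * sin x ^ n) * cos x + (- sin x) * sin x ^ Suc n) (at x)"
        by (rule DERIV_mult) (rule DERIV_cos)
      thus ?thesis unfolding F_def by (simp add: algebra_simps)
    qed
    moreover have "(n+1) * sin x ^ n * cos x * cos x + sin x ^ (n+1) * (- sin x) = f x"
    proof -
      have cc: "cos x * cos x = 1 - sin x * sin x" using sin_cos_squared_add3[of x] by linarith
      have "(n+1) * sin x ^ n * cos x * cos x = (n+1) * sin x ^ n * (cos x * cos x)" by simp
      also have "\<dots> = (n+1) * sin x ^ n - (n+1) * (sin x ^ n * sin x * sin x)" unfolding cc by (simp add: algebra_simps)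
      finally show ?thesis unfolding f_def by (simp add: power_add algebra_simps)
    qed
    ultimately show ?thesis
      by (simp add: has_real_derivative_iff_has_vector_derivative has_vector_derivative_at_within)
  qed
  have "(f has_integral (F (pi/2) - F (-(pi/2)))) {-(pi/2)..pi/2}"
    by (rule fundamental_theorem_of_calculus) (use d in auto)
  moreover have "F (pi/2) - F (-(pi/2)) = 0" unfolding F_def by simp
  ultimately have "(f has_integral 0) {-(pi/2)..pi/2}" by simp
  hence "integral {-(pi/2)..pi/2} f = 0" by (rule integral_unique)
  moreover have "integral {-(pi/2)..pi/2} f = (n+1) * integral {-(pi/2)..pi/2} (\<lambda>x. sin x ^ n) - (n+2) * integral {-(pi/2)..pi/2} (\<lambda>x. sin x ^ (n+2))"
    unfolding f_def
    by (subst integral_diff) (auto intro!: integrable_continuous_interval continuous_intros)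
  ultimately show ?thesis by (simp add: field_simps)
qed

lemma S0: "integral {-(pi/2)..pi/2} (\<lambda>x. sin x ^ 0) = pi" by simp

lemma S2: "integral {-(pi/2)..pi/2} (\<lambda>x. sin x ^ 2) = pi/2"
  using sin_pow_rec[of 0] by (simp add: power2_eq_square)
lemma S4: "integral {-(pi/2)..pi/2} (\<lambda>x. sin x ^ 4) = 3*pi/8"
  using sin_pow_rec[of 2] by (simp add: S2)
lemma S6: "integral {-(pi/2)..pi/2} (\<lambda>x. sin x ^ 6) = 5*pi/16"
  using sin_pow_rec[of 4] by (simp add: S4)
lemma S8: "integral {-(pi/2)..pi/2} (\<lambda>x. sin x ^ 8) = 35*pi/128"
  using sin_pow_rec[of 6] by (simp add: S6)
lemma S10: "integral {-(pi/2)..pi/2} (\<lambda>x. sin x ^ 10) = 63*pi/256"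
  using sin_pow_rec[of 8] by (simp add: S8)

lemma poly_int:
  "((\<lambda>x. c0 + c1 * sin x ^ 2 + c2 * sin x ^ 4 + c3 * sin x ^ 6 + c4 * sin x ^ 8 + c5 * sin x ^ 10)
     has_integral pi * (c0 + c1/2 + 3*c2/8 + 5*c3/16 + 35*c4/128 + 63*c5/256)) {-(pi/2)..pi/2}"
proof -
  have h: "((\<lambda>x. c * sin x ^ m) has_integral c * integral {-(pi/2)..pi/2} (\<lambda>x. sin x ^ m)) {-(pi/2)..pi/2}" for c m
    by (intro has_integral_mult_right integrable_integral sin_pow_integrable)
  have h0: "((\<lambda>x. c0) has_integral c0 * pi) {-(pi/2)..pi/2}"
    using has_integral_const_real[of c0 "-pi/2" "pi/2"] by (simp add: algebra_simps)
  have "((\<lambda>x. c0 + c1 * sin x ^ 2 + c2 * sin x ^ 4 + c3 * sin x ^ 6 + c4 * sin x ^ 8 + c5 * sin x ^ 10)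
     has_integral c0 * pi + c1 * (pi/2) + c2 * (3*pi/8) + c3 * (5*pi/16) + c4 * (35*pi/128) + c5 * (63*pi/256)) {-(pi/2)..pi/2}"
    using h0 h[of c1 2] h[of c2 4] h[of c3 6] h[of c4 8] h[of c5 10]
    unfolding S2 S4 S6 S8 S10 by (intro has_integral_add) auto
  thus ?thesis by (simp add: algebra_simps)
qed
lemma final_alg:
  fixes p A B C P F E :: real
  assumes p: "0 < p" and A: "0 < A" and B: "0 < B" and C: "0 < C" and P: "0 < P" and F: "0 \<le> F"
    and h1: "\<And>l. 0 < l \<Longrightarrow> 3 * l^2 * (p * A) \<le> 2 * l^3 * F + p * C"
    and h2: "\<And>m. 0 < m \<Longrightarrow> 2 * m * E \<le> m^2 * (p * P) + p * B"
    and poly: "P * B * C^3 < 4 * A^9"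
  shows "p^2 * E < 2 * F^3"
proof -
  define l where "l = sqrt (C / A)"
  have l0: "0 < l" unfolding l_def using A C by simp
  have l2: "l^2 = C / A" unfolding l_def using A C by simp
  have "3 * l^2 * (p * A) = 3 * p * C" using l2 A by (simp add: field_simps)
  with h1[OF l0] have "3 * p * C \<le> 2 * l^3 * F + p * C" by linarith
  hence "p * C \<le> l^3 * F" by linarith
  also have "l^3 * F = l * (C / A) * F" using l2 by (simp add: power3_eq_cube power2_eq_square)
  finally have "p * A \<le> l * F" using A C by (simp add: field_simps)
  hence "(p * A)^2 \<le> (l * F)^2" using p A by (intro power_mono) auto
  hence "(p * A)^2 \<le> (C / A) * F^2" using l2 by (simp add: power_mult_distrib)
  hence "A * (p * A)^2 \<le> C * F^2" using A by (simp add: field_simps)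
  hence FF: "p^2 * A^3 / C \<le> F^2" using C by (simp add: field_simps power2_eq_square power3_eq_cube)
  have Fpos: "0 < F"
  proof -
    have "0 < p^2 * A^3 / C" using p A C by simp
    with FF have "0 < F^2" by linarith
    with F show ?thesis by (simp add: less_le)
  qed
  define m where "m = sqrt (B / P)"
  have m0: "0 < m" unfolding m_def using B P by simp
  have m2: "m^2 = B / P" unfolding m_def using B P by simp
  have "m^2 * (p * P) = p * B" using m2 P by (simp add: field_simps)
  with h2[OF m0] have "2 * m * E \<le> p * B + p * B" by linarith
  hence EE: "m * E \<le> p * B" by linarith
  show ?thesis
  proof (cases "E \<le> 0")
    case True
    have "p^2 * E \<le> 0" using True p by (simp add: mult_nonneg_nonpos)
    moreover have "0 < 2 * F^3" using Fpos by simp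
    ultimately show ?thesis by linarith
  next
    case False
    hence E0: "0 < E" by simp
    have "(m * E)^2 \<le> (p * B)^2" using EE E0 m0 by (intro power_mono) auto
    hence "(B / P) * E^2 \<le> p^2 * B^2" using m2 by (simp add: power_mult_distrib)
    hence "P * ((B / P) * E^2) \<le> P * (p^2 * B^2)" using P by (intro mult_left_mono) auto
    hence "B * E^2 \<le> B * (p^2 * B * P)" using P by (simp add: power2_eq_square mult_ac)
    hence "E^2 \<le> p^2 * B * P" using B by simp
    have s1: "p^4 * E^2 \<le> p^4 * (p^2 * B * P)"
      using \<open>E^2 \<le> p^2 * B * P\<close> p by (intro mult_left_mono) auto
    have s2: "P * B < 4 * A^9 / C^3" using poly C by (subst pos_less_divide_eq) auto
    have s3: "p^6 * (P * B) < p^6 * (4 * A^9 / C^3)" using s2 p by (intro mult_strict_left_mono) auto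
    have s4: "p^6 * (4 * A^9 / C^3) = 4 * (p^2 * A^3 / C)^3"
      by (simp add: power_divide power_mult_distrib power_mult[symmetric])
    have s5: "(p^2 * A^3 / C)^3 \<le> (F^2)^3" using FF p A C by (intro power_mono) auto
    have "(p^2 * E)^2 < (2 * F^3)^2"
    proof -
      have "(p^2 * E)^2 = p^4 * E^2" by algebra
      also have "\<dots> \<le> p^4 * (p^2 * B * P)" using s1 .
      also have "\<dots> = p^6 * (P * B)" by algebra
      also have "\<dots> < 4 * (p^2 * A^3 / C)^3" using s3 s4 by simp
      also have "\<dots> \<le> 4 * (F^2)^3" using s5 by simp
      also have "\<dots> = (2 * F^3)^2" by algebra
      finally show ?thesis .
    qed
    moreover have "0 \<le> 2 * F^3" using Fpos by simp
    ultimately show ?thesis by (rule power_less_imp_less_base)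
  qed
qed
lemma polyid:
  fixes e :: real
  shows "16*(2-e)*(8-3*e^2)^9 - (8 - 8*e + 3*e^2)*(4-3*e+e^2)*(512 + 128*e - 448*e^2 - 320*e^3 + 160*e^4 + 133*e^5)^3
     = e * (2147483648 * e^0 * (1-e)^18 + 34359738368 * e^1 * (1-e)^17 + 255953207296 * e^2 * (1-e)^16 + 1179119517696 * e^3 * (1-e)^15 + 3762341019648 * e^4 * (1-e)^14 + 8821527281664 * e^5 * (1-e)^13 + 15728075341824 * e^6 * (1-e)^12 + 21757832331264 * e^7 * (1-e)^11 + 23615174279168 * e^8 * (1-e)^10 + 20202687791104 * e^9 * (1-e)^9 + 13614569938944 * e^10 * (1-e)^8 + 7187153372160 * e^11 * (1-e)^7 + 2939162644992 * e^12 * (1-e)^6 + 914202059904 * e^13 * (1-e)^5 + 210160384800 * e^14 * (1-e)^4 + 34110521688 * e^15 * (1-e)^3 + 3608935020 * e^16 * (1-e)^2 + 211661725 * e^17 * (1-e)^1 + 4297250 * e^18 * (1-e)^0)"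
  by algebra

lemma polypos:
  fixes e :: real
  assumes "0 < e" "e < 1"
  shows "(8 - 8*e + 3*e^2)*(4-3*e+e^2)*(512 + 128*e - 448*e^2 - 320*e^3 + 160*e^4 + 133*e^5)^3 < 16*(2-e)*(8-3*e^2)^9"
proof -
  have "0 < e * (2147483648 * e^0 * (1-e)^18 + 34359738368 * e^1 * (1-e)^17 + 255953207296 * e^2 * (1-e)^16 + 1179119517696 * e^3 * (1-e)^15 + 3762341019648 * e^4 * (1-e)^14 + 8821527281664 * e^5 * (1-e)^13 + 15728075341824 * e^6 * (1-e)^12 + 21757832331264 * e^7 * (1-e)^11 + 23615174279168 * e^8 * (1-e)^10 + 20202687791104 * e^9 * (1-e)^9 + 13614569938944 * e^10 * (1-e)^8 + 7187153372160 * e^11 * (1-e)^7 + 2939162644992 * e^12 * (1-e)^6 + 914202059904 * e^13 * (1-e)^5 + 210160384800 * e^14 * (1-e)^4 + 34110521688 * e^15 * (1-e)^3 + 3608935020 * e^16 * (1-e)^2 + 211661725 * e^17 * (1-e)^1 + 4297250 * e^18 * (1-e)^0)"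
    using assms by (intro mult_pos_pos add_pos_nonneg mult_nonneg_nonneg zero_le_power; simp)
  thus ?thesis using polyid[of e] by linarith
qed

lemma Cpos:
  fixes e :: real
  assumes "0 < e" "e < 1"
  shows "0 < 512 + 128*e - 448*e^2 - 320*e^3 + 160*e^4 + 133*e^5"
proof -
  have "512 + 128*e - 448*e^2 - 320*e^3 + 160*e^4 + 133*e^5 = 512*(1-e)^5 + 2688*e*(1-e)^4 + 5184*e^2*(1-e)^3 + 4224*e^3*(1-e)^2 + 1248*e^4*(1-e) + 165*e^5"
    by algebra
  moreover have "0 < 512*(1-e)^5 + 2688*e*(1-e)^4 + 5184*e^2*(1-e)^3 + 4224*e^3*(1-e)^2 + 1248*e^4*(1-e) + 165*e^5"
    using assms by (intro add_nonneg_pos add_nonneg_nonneg mult_nonneg_nonneg zero_le_power mult_pos_pos; simp)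
  ultimately show ?thesis by simp
qed

lemma poly_int':
  assumes "\<And>x. f x = ca + cb * sin x ^ 2 + cc * sin x ^ 4 + cd * sin x ^ 6 + ce * sin x ^ 8 + cf * sin x ^ 10"
    and "v = pi * (ca + cb/2 + 3*cc/8 + 5*cd/16 + 35*ce/128 + 63*cf/256)"
  shows "(f has_integral v) {-(pi/2)..pi/2}"
proof -
  have "f = (\<lambda>x. ca + cb * sin x ^ 2 + cc * sin x ^ 4 + cd * sin x ^ 6 + ce * sin x ^ 8 + cf * sin x ^ 10)"
    using assms(1) by (rule ext)
  thus ?thesis using poly_int assms(2) by simp
qed

lemma amgm3:
  fixes r W q l :: real
  assumes "0 < r" "0 \<le> W" "0 \<le> q" "0 < l"
  shows "3*l^2*(W*q) \<le> 2*l^3*(W/r) + W*r^2*q^3"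
proof -
  have "0 \<le> (r*q - l)^2 * (r*q + 2*l)" using assms by (intro mult_nonneg_nonneg) auto
  hence "0 \<le> W / r * ((r*q - l)^2 * (r*q + 2*l))" using assms by (intro mult_nonneg_nonneg) auto
  also have "W / r * ((r*q - l)^2 * (r*q + 2*l)) = 2*l^3*(W/r) + W*r^2*q^3 - 3*l^2*(W*q)"
    using assms(1) by (simp add: field_simps power2_eq_square power3_eq_cube)
  finally show ?thesis by simp
qed

lemma amgm2:
  fixes r W m :: real
  assumes "0 < r" "0 < m"
  shows "2*m*(W^2/r) \<le> m^2*W^2 + W^2/r^2"
proof -
  have "0 \<le> W^2 * (m - 1/r)^2" by simp
  also have "W^2 * (m - 1/r)^2 = m^2*W^2 + W^2/r^2 - 2*m*(W^2/r)"
    using assms(1) by (simp add: field_simps power2_eq_square)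
  finally show ?thesis by simp
qed

lemma bpt:
  fixes k w :: real
  assumes "0 < k" "k \<le> w" "w \<le> 1"
  shows "w^2/(w+k) \<le> w - k + k/2 - k*(w-k)/(2*(1+k))"
proof -
  define R where "R = w - k + k/2 - k*(w-k)/(2*(1+k))"
  have id: "(2*(1+k)*(w-k) + k*(1+k) - k*(w-k))*(w+k) = 2*(1+k)*w^2 + k*(w-k)*(1-w)" by algebra
  have R2: "2*(1+k)*R = 2*(1+k)*(w-k) + k*(1+k) - k*(w-k)"
    unfolding R_def using assms by (simp add: field_simps)
  have "0 \<le> k*(w-k)*(1-w)" using assms by (intro mult_nonneg_nonneg) auto
  hence "2*(1+k)*w^2 \<le> 2*(1+k)*(R*(w+k))" using id R2 by (simp add: mult.assoc[symmetric])
  hence "w^2 \<le> R*(w+k)" using assms by (simp add: mult_le_cancel_left_pos)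
  hence "w^2/(w+k) \<le> R" using assms by (simp add: pos_divide_le_eq)
  thus ?thesis unfolding R_def .
qed

lemma main_ineq:
  fixes e :: real
  assumes e0: "0 < e" and e1: "e < 1"
  shows "pi^2 * integral {-(pi/2)..pi/2} (\<lambda>x. (1 - e* sin x^2)^2 / sqrt (2 - e - e* sin x^2))
       < 2 * (integral {-(pi/2)..pi/2} (\<lambda>x. (1 - e* sin x^2) / sqrt (2 - e - e* sin x^2)))^3"
proof -
  define S where "S = {-(pi/2)..pi/2::real}"
  define W where "W = (\<lambda>x::real. 1 - e* sin x^2)"
  define U where "U = (\<lambda>x::real. 2 - e - e* sin x^2)"
  define q where "q = (\<lambda>x::real. 1 + e* sin x^2)"
  define G1 where "G1 = (\<lambda>x. W x / sqrt (U x))"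
  define G2 where "G2 = (\<lambda>x. W x ^ 2 / sqrt (U x))"
  define F where "F = integral S G1"
  define E where "E = integral S G2"
  define k where "k = 1 - e"
  have s01: "0 \<le> sin x^2 \<and> sin x^2 \<le> 1" for x :: real using abs_sin_le_one[of x] by (simp add: abs_square_le_1)
  have es: "e * sin x^2 \<le> e" for x using conjunct2[OF s01[of x]] conjunct1[OF s01[of x]] e0 by (simp add: mult_left_le)
  have Wk: "k \<le> W x" for x unfolding W_def k_def using es[of x] by simp
  have W1: "W x \<le> 1" for x unfolding W_def using conjunct2[OF s01[of x]] conjunct1[OF s01[of x]] e0 by simp
  have k0: "0 < k" unfolding k_def using e1 by simp
  have W0: "0 < W x" for x using Wk[of x] k0 by linarith
  have UW: "U x = W x + k" for x unfolding U_def W_def k_def by simp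
  have U0: "0 < U x" for x using UW[of x] W0[of x] k0 by simp
  have q0: "0 \<le> q x" for x unfolding q_def using conjunct2[OF s01[of x]] conjunct1[OF s01[of x]] e0 by simp
  have sU0: "0 < sqrt (U x)" for x using U0[of x] by simp
  have contW: "continuous_on S W" unfolding W_def by (intro continuous_intros)
  have contU: "continuous_on S (\<lambda>x. sqrt (U x))" unfolding U_def by (intro continuous_intros)
  have int1: "G1 integrable_on S" unfolding G1_def S_def W_def U_def
    using sU0[unfolded U_def] by (intro integrable_continuous_interval continuous_intros) (auto simp: less_imp_neq[symmetric])
  have int2: "G2 integrable_on S" unfolding G2_def S_def W_def U_def
    using sU0[unfolded U_def] by (intro integrable_continuous_interval continuous_intros) (auto simp: less_imp_neq[symmetric])
  define A where "A = 1 - 3*e^2/8"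
  define C where "C = (512 + 128*e - 448*e^2 - 320*e^3 + 160*e^4 + 133*e^5) / 256"
  define P where "P = 1 - e + 3*e^2/8"
  define c0 where "c0 = e + (1-e)/2 - (1-e)*e/(2*(2-e))"
  define c1 where "c1 = - e + (1-e)*e/(2*(2-e))"
  define B where "B = c0 + c1/2"
  have hA: "((\<lambda>x. W x * q x) has_integral pi * A) S" unfolding S_def
    by (rule poly_int'[where ca=1 and cb=0 and cc="-(e^2)" and cd=0 and ce=0 and cf=0])
       (simp_all add: W_def q_def A_def algebra_simps power2_eq_square power4_eq_xxxx)
  have hC: "((\<lambda>x. W x * U x * q x ^ 3) has_integral pi * C) S" unfolding S_def
    by (rule poly_int'[where ca="2-e" and cb="3*e-2*e^2" and cc="-2*e^2" and cd="-4*e^3+2*e^4" and ce="e^5" and cf="e^5"])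
       (unfold W_def U_def q_def C_def; algebra)+
  have hP: "((\<lambda>x. W x ^ 2) has_integral pi * P) S" unfolding S_def
    by (rule poly_int'[where ca=1 and cb="-2*e" and cc="e^2" and cd=0 and ce=0 and cf=0])
       (unfold W_def P_def; algebra)+
  have hB: "((\<lambda>x. c0 + c1 * sin x ^ 2) has_integral pi * B) S" unfolding S_def
    by (rule poly_int'[where ca=c0 and cb=c1 and cc=0 and cd=0 and ce=0 and cf=0])
       (simp_all add: B_def)
  have e2: "e^2 < 1" using e0 e1 by (simp add: power_less_one_iff)
  have Apos: "0 < A" unfolding A_def using e2 by simp
  have Cpos': "0 < C" unfolding C_def using Cpos[OF e0 e1] by simp
  have Ppos: "0 < P" unfolding P_def using e1 zero_le_power2[of e] by linarith
  have Bval: "B = (4 - 3*e + e^2)/(4*(2-e))"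
  proof -
    define t where "t = (1-e)*e/(2*(2-e))"
    have t2: "t * (2*(2-e)) = (1-e)*e" unfolding t_def using e1 by simp
    have hB': "B = 1/2 - t/2" unfolding B_def c0_def c1_def t_def[symmetric] by (simp add: field_simps)
    have "B * (4*(2-e)) = 2*(2-e) - t * (2*(2-e))" unfolding hB' by (simp add: algebra_simps)
    also have "\<dots> = 4 - 3*e + e^2" unfolding t2 by (simp add: algebra_simps power2_eq_square)
    finally show ?thesis using e1 by (simp add: eq_divide_eq)
  qed
  have num: "0 < 4 - 3*e + e^2" using e1 zero_le_power2[of e] by linarith
  have Bpos: "0 < B" unfolding Bval using num e1 by (intro divide_pos_pos) auto
  have Fnn: "0 \<le> F" unfolding F_def
    by (rule integral_nonneg[OF int1]) (auto simp: G1_def intro!: divide_nonneg_pos W0[THEN less_imp_le] sU0)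
  have sq: "sqrt (U x) ^ 2 = U x" for x using U0[of x] by simp
  have h1: "3 * l^2 * (pi * A) \<le> 2 * l^3 * F + pi * C" if l: "0 < l" for l
  proof -
    have a: "((\<lambda>x. 3*l^2 * (W x * q x)) has_integral 3*l^2*(pi*A)) S" by (rule has_integral_mult_right[OF hA])
    have b: "((\<lambda>x. 2*l^3 * G1 x + W x * U x * q x ^ 3) has_integral 2*l^3*F + pi*C) S"
      unfolding F_def by (intro has_integral_add has_integral_mult_right integrable_integral int1 hC)
    show ?thesis
    proof (rule has_integral_le[OF a b])
      fix x
      have "3*l^2*(W x * q x) \<le> 2*l^3*(W x / sqrt (U x)) + W x * sqrt (U x)^2 * q x^3"
        using amgm3[of "sqrt (U x)" "W x" "q x" l] sU0[of x] W0[of x] q0[of x] l by simp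
      thus "3*l^2*(W x * q x) \<le> 2*l^3 * G1 x + W x * U x * q x ^ 3" unfolding G1_def sq .
    qed
  qed
  have h2: "2 * m * E \<le> m^2 * (pi * P) + pi * B" if m: "0 < m" for m
  proof -
    have a: "((\<lambda>x. 2*m * G2 x) has_integral 2*m*E) S"
      unfolding E_def by (intro has_integral_mult_right integrable_integral int2)
    have b: "((\<lambda>x. m^2 * W x ^ 2 + (c0 + c1 * sin x ^ 2)) has_integral m^2*(pi*P) + pi*B) S"
      by (intro has_integral_add has_integral_mult_right hP hB)
    show ?thesis
    proof (rule has_integral_le[OF a b])
      fix x
      have c: "2*m*(W x^2 / sqrt (U x)) \<le> m^2 * W x^2 + W x^2 / sqrt (U x)^2"
        using amgm2[of "sqrt (U x)" m "W x"] sU0[of x] m by simp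
      have d: "W x^2 / (W x + k) \<le> W x - k + k/2 - k*(W x - k)/(2*(1+k))"
        using bpt[of k "W x"] k0 Wk[of x] W1[of x] by simp
      have ee: "W x - k + k/2 - k*(W x - k)/(2*(1+k)) = c0 + c1 * sin x ^ 2"
      proof -
        define t where "t = (1-e)*e/(2*(2-e))"
        have wk: "W x - k = e * (1 - sin x^2)" unfolding W_def k_def by (simp add: algebra_simps)
        have k1: "1 + k = 2 - e" unfolding k_def by simp
        have h: "k*(W x - k)/(2*(1+k)) = t * (1 - sin x^2)" unfolding wk k1 by (simp add: t_def k_def)
        show ?thesis unfolding h c0_def c1_def t_def[symmetric] by (simp add: W_def k_def algebra_simps)
      qed
      have c2: "2*m*(W x^2 / sqrt (U x)) \<le> m^2 * W x^2 + W x^2 / U x" using c unfolding sq .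
      have d2: "W x^2 / U x \<le> W x - k + k/2 - k*(W x - k)/(2*(1+k))" unfolding UW using d .
      show "2*m * G2 x \<le> m^2 * W x ^ 2 + (c0 + c1 * sin x ^ 2)"
        using c2 d2 ee unfolding G2_def by linarith
    qed
  qed
  have poly: "P * B * C^3 < 4 * A^9"
  proof -
    have x: "(8*P)*(4-3*e+e^2)*(256*C)^3 < 16*(2-e)*(8*A)^9"
    proof -
      have eP: "8*P = 8 - 8*e + 3*e^2" unfolding P_def by simp
      have eC: "256*C = 512 + 128*e - 448*e^2 - 320*e^3 + 160*e^4 + 133*e^5" unfolding C_def by simp
      have eA: "8*A = 8 - 3*e^2" unfolding A_def by simp
      show ?thesis unfolding eP eC eA by (rule polypos[OF e0 e1])
    qed
    have y: "(8*P)*(4-3*e+e^2)*(256*C)^3 = 134217728 * (P*(4-3*e+e^2)*C^3)" by (simp add: power_mult_distrib)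
    have z: "16*(2-e)*(8*A)^9 = 134217728 * (16*(2-e)*A^9)" by (simp add: power_mult_distrib)
    have w: "P*(4-3*e+e^2)*C^3 < 16*(2-e)*A^9" using x unfolding y z by simp
    have "P * B * C^3 = P*(4-3*e+e^2)*C^3 / (4*(2-e))" unfolding Bval by simp
    also have "\<dots> < 16*(2-e)*A^9 / (4*(2-e))" using w e1 by (intro divide_strict_right_mono) auto
    also have "\<dots> = 4 * A^9" using e1 by (simp add: field_simps)
    finally show ?thesis .
  qed
  have "pi^2 * E < 2 * F^3"
    by (rule final_alg[OF pi_gt_zero Apos Bpos Cpos' Ppos Fnn h1 h2 poly])
  thus ?thesis unfolding E_def F_def G1_def G2_def W_def U_def S_def .
qed


lemma LBINT_to_integral:
  fixes G :: "real \<Rightarrow> real"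
  assumes "continuous_on {-(pi/2)..pi/2} G"
  shows "(LBINT x=-pi/2..pi/2. G x) = integral {-(pi/2)..pi/2} G"
proof -
  have "(LBINT x=-pi/2..pi/2. G x) = (LBINT x=-(pi/2)..pi/2. G x)" by simp
  also have "\<dots> = integral {-(pi/2)..pi/2} G"
    by (rule interval_integral_eq_integral) (auto intro: borel_integrable_atLeastAtMost' assms)
  finally show ?thesis .
qed

theorem proposition14:
  fixes b :: real
  assumes "0 < b" and "b < pi / 2"
  shows "pi ^ 2 * I1 b / I2 b ^ 3 < 2"
proof -
  define e where "e = sin b ^ 2"
  have sb0: "0 < sin b" using assms by (intro sin_gt_zero) auto
  have sb1: "sin b < 1" using sin_monotone_2pi[of b "pi/2"] assms by simp
  have e0: "0 < e" unfolding e_def using sb0 by simp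
  have e1: "e < 1" unfolding e_def using sb0 sb1 by (simp add: power_less_one_iff)
  have U0: "0 < 2 - e - e * sin x^2" for x
  proof -
    have "sin x^2 \<le> 1" using abs_sin_le_one[of x] by (simp add: abs_square_le_1)
    hence "e * sin x^2 \<le> e" using e0 by (simp add: mult_left_le)
    thus ?thesis using e1 by simp
  qed
  define G1 where "G1 = (\<lambda>x. (1 - e * sin x^2) / sqrt (2 - e - e * sin x^2))"
  define G2 where "G2 = (\<lambda>x. (1 - e * sin x^2)^2 / sqrt (2 - e - e * sin x^2))"
  have c1: "continuous_on {-(pi/2)..pi/2} G1" unfolding G1_def using U0
    by (intro continuous_intros) (auto simp: less_imp_neq[symmetric])
  have c2: "continuous_on {-(pi/2)..pi/2} G2" unfolding G2_def using U0
    by (intro continuous_intros) (auto simp: less_imp_neq[symmetric])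
  have hI1: "I1 b = integral {-(pi/2)..pi/2} G2"
  proof -
    have "I1 b = (LBINT x=-pi/2..pi/2. G2 x)"
      unfolding I1_def G2_def e_def using subst_lemma[OF assms, of 2] by simp
    thus ?thesis using LBINT_to_integral[OF c2] by simp
  qed
  have hI2: "I2 b = integral {-(pi/2)..pi/2} G1"
  proof -
    have "I2 b = (LBINT x=-pi/2..pi/2. G1 x)"
      unfolding I2_def G1_def e_def using subst_lemma[OF assms, of 1] by simp
    thus ?thesis using LBINT_to_integral[OF c1] by simp
  qed
  have main: "pi^2 * I1 b < 2 * I2 b ^ 3"
    unfolding hI1 hI2 G1_def G2_def by (rule main_ineq[OF e0 e1])
  have nn: "0 \<le> I2 b" unfolding hI2
  proof (rule integral_nonneg)
    show "G1 integrable_on {-(pi/2)..pi/2}" using c1 by (rule integrable_continuous_interval)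
    fix x
    have "0 \<le> 1 - e * sin x^2"
    proof -
      have "sin x^2 \<le> 1" using abs_sin_le_one[of x] by (simp add: abs_square_le_1)
      hence "e * sin x^2 \<le> e" using e0 by (simp add: mult_left_le)
      thus ?thesis using e1 by simp
    qed
    thus "0 \<le> G1 x" unfolding G1_def using U0[of x] by simp
  qed
  show ?thesis
  proof (cases "I2 b = 0")
    case True
    then show ?thesis by simp
  next
    case False
    hence "0 < I2 b ^ 3" using nn by simp
    thus ?thesis using main by (simp add: pos_divide_less_eq)
  qed
qed

end
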